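(* Let $t$ be a positive integer that is not a power of two. Then the number of $k\in\{0,1,\dots,t\}$ for which $\mathfrak{a}_t(t,k)$ is odd is an odd integer greater than one (in particular, not a power of two).
   Context: Let $\mathfrak{a}_t:\mathbb{Z}\times\mathbb{Z}\to\mathbb{Z}$ be the unique function satisfying: (i) $\mathfrak{a}_t(0,0)=1$; (ii) $\mathfrak{a}_t(n,k)=0$ if $n<0$, or $k<0$, or $k>\min\{\lfloor (n-1+t)/2\rfloor, n\}$; (iii) $\mathfrak{a}_t(n,k)=\mathfrak{a}_t(n-1,k-1)+\mathfrak{a}_t(n-1,k)$ for all other integer pairs $(n,k)$. *)

theory Defs
  imports Main
begin

fun frak_a_aux :: "int \<Rightarrow> nat \<Rightarrow> int \<Rightarrow> int" where
  "frak_a_aux t 0 k = (if k = 0 then 1 else 0)"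
| "frak_a_aux t (Suc m) k =
     (if k < 0 \<or> k > min ((int (Suc m) - 1 + t) div 2) (int (Suc m)) then 0
      else frak_a_aux t m (k - 1) + frak_a_aux t m k)"

definition frak_a :: "int \<Rightarrow> int \<Rightarrow> int \<Rightarrow> int" where
  "frak_a t n k = (if n < 0 then 0 else frak_a_aux t (nat n) k)"

end

theory Submission
  imports Defs
begin

lemma aux_lt:
  "int n < t \<Longrightarrow> frak_a_aux t n k = (if 0 \<le> k \<and> k \<le> int n then int (n choose nat k) else 0)"
proof (induction n arbitrary: k)
  case 0
  then show ?case by auto
next
  case (Suc m)
  have cap: "min ((int (Suc m) - 1 + t) div 2) (int (Suc m)) = int (Suc m)"
    using Suc.prems by linarith
  have IH: "\<And>k. frak_a_aux t m k = (if 0 \<le> k \<and> k \<le> int m then int (m choose nat k) else 0)"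
    using Suc by simp
  show ?case
  proof (cases "k < 0 \<or> k > int (Suc m)")
    case True then show ?thesis using cap by auto
  next
    case False
    show ?thesis
    proof (cases "k = 0")
      case True then show ?thesis using cap IH by simp
    next
      case k0: False
      then obtain j where j: "nat k = Suc j" using False by (metis gr0_implies_Suc nat_0_iff not_le zero_less_iff_neq_zero linorder_neqE_linordered_idom less_le)
      have kk: "k = int (Suc j)" using j False by auto
      have "frak_a_aux t (Suc m) k = frak_a_aux t m (k-1) + frak_a_aux t m k" using False cap by simp
      also have "\<dots> = int (m choose j) + int (m choose Suc j)"
        using IH[of "k-1"] IH[of k] kk False by (auto simp: binomial_eq_0 nat_add_distrib)
      also have "\<dots> = int (Suc m choose nat k)" using j by simp
      finally show ?thesis using False by simp
    qed
  qed
qed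

lemma aux_eq:
  assumes "t > 0" "0 \<le> k" "k \<le> t"
  shows "frak_a t t k = (if k < t then int (nat t choose nat k) else 0)"
proof -
  obtain m where m: "nat t = Suc m" using assms by (metis gr0_implies_Suc zero_less_nat_eq)
  have tm: "t = int (Suc m)" using m assms by auto
  have cap: "min ((int (Suc m) - 1 + t) div 2) (int (Suc m)) = t - 1"
    using tm by linarith
  have IH: "\<And>k. frak_a_aux t m k = (if 0 \<le> k \<and> k \<le> int m then int (m choose nat k) else 0)"
    using aux_lt tm by simp
  have fa: "frak_a t t k = frak_a_aux t (Suc m) k" using m assms unfolding frak_a_def by simp
  show ?thesis
  proof (cases "k = t")
    case True
    have "(int m + t) div 2 < t" using tm by presburger
    then show ?thesis using fa True tm by simp
  next
    case kt: False
    show ?thesis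
    proof (cases "k = 0")
      case True then show ?thesis using fa cap IH assms by simp
    next
      case k0: False
      define j where "j = nat k - 1"
      have j: "nat k = Suc j" using k0 assms unfolding j_def by simp
      have kk: "k = int (Suc j)" using j assms by auto
      have "\<not> (int m + t) div 2 < k" using tm assms kt by presburger
      then have "frak_a t t k = frak_a_aux t m (k-1) + frak_a_aux t m k" using fa cap assms kt by simp
      also have "\<dots> = int (m choose j) + int (m choose Suc j)"
        using IH[of "k-1"] IH[of k] kk assms tm kt by (auto simp: binomial_eq_0 nat_add_distrib)
      also have "\<dots> = int (nat t choose nat k)" using j m by simp
      finally show ?thesis using kt assms by simp
    qed
  qed
qed

lemma choose_SS:
  "Suc (Suc m) choose Suc (Suc k) = (m choose Suc (Suc k)) + 2 * (m choose Suc k) + (m choose k)"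
  by simp

lemma choose_double:
  "odd ((2*n) choose (2*j)) = odd (n choose j) \<and> even ((2*n) choose (2*j+1))"
proof (induction n arbitrary: j)
  case 0
  then show ?case by (cases j) auto
next
  case (Suc n)
  have e: "2 * Suc n = Suc (Suc (2*n))" by simp
  show ?case
  proof (cases j)
    case 0
    then show ?thesis by simp
  next
    case (Suc i)
    have a: "2*j = Suc (Suc (2*i))" "2*j+1 = Suc (Suc (2*i+1))" using Suc by auto
    have h1: "(2*Suc n) choose (2*j) = ((2*n) choose (2*(Suc i))) + 2 * ((2*n) choose (2*i+1)) + ((2*n) choose (2*i))"
      unfolding e a(1) choose_SS by (simp add: Suc)
    have h2: "(2*Suc n) choose (2*j+1) = ((2*n) choose (2*(Suc i)+1)) + 2 * ((2*n) choose (2*(Suc i))) + ((2*n) choose (2*i+1))"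
      unfolding e a(2) choose_SS by (simp add: Suc)
    show ?thesis using h1 h2 Suc.IH[of "Suc i"] Suc.IH[of i] Suc by simp
  qed
qed

lemma choose_pow2:
  "odd ((2^v*n) choose (2^v*j)) = odd (n choose j)"
proof (induction v)
  case 0 then show ?case by simp
next
  case (Suc v)
  have "(2^Suc v*n) choose (2^Suc v*j) = (2*(2^v*n)) choose (2*(2^v*j))" by (simp add: mult.assoc)
  then show ?case using choose_double[of "2^v*n" "2^v*j"] Suc by simp
qed

lemma two_adic: "(n::nat) > 0 \<Longrightarrow> \<exists>v q. n = 2^v * q \<and> odd q"
proof (induction n rule: less_induct)
  case (less n)
  show ?case
  proof (cases "odd n")
    case True then show ?thesis by (metis mult_1 power_0)
  next
    case False
    then obtain m where m: "n = 2*m" by auto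
    with less.prems have "m < n" "m > 0" by auto
    then obtain v q where "m = 2^v*q" "odd q" using less.IH by blast
    then show ?thesis using m by (metis mult.assoc power_Suc)
  qed
qed

lemma card_odd_parity:
  assumes "finite A"
  shows "even (card {x\<in>A. odd (f x :: nat)}) = even (sum f A)"
proof -
  have "sum f A mod 2 = (\<Sum>x\<in>A. f x mod 2) mod 2" by (simp add: mod_sum_eq)
  also have "(\<Sum>x\<in>A. f x mod 2) = (\<Sum>x\<in>A. if odd (f x) then 1 else 0)"
    by (rule sum.cong) (auto simp: odd_iff_mod_2_eq_one)
  also have "\<dots> = card {x\<in>A. odd (f x)}"
    using sum.inter_filter[OF assms, of "\<lambda>_. 1::nat" "\<lambda>x. odd (f x)", symmetric] by simp
  finally show ?thesis by (metis even_iff_mod_2_eq_zero)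
qed

theorem lemma4p4:
  fixes t :: int
  assumes "t > 0"
    and "\<not> (\<exists>m::nat. t = 2 ^ m)"
  shows "odd (card {k \<in> {0..t}. odd (frak_a t t k)})
       \<and> card {k \<in> {0..t}. odd (frak_a t t k)} > 1
       \<and> \<not> (\<exists>m::nat. card {k \<in> {0..t}. odd (frak_a t t k)} = 2 ^ m)"
proof -
  define n where "n = nat t"
  have n0: "n > 0" using assms n_def by simp
  have tn: "t = int n" using assms n_def by simp
  have np: "\<not> (\<exists>m::nat. n = 2 ^ m)"
  proof
    assume "\<exists>m::nat. n = 2 ^ m"
    then obtain m where "n = 2^m" by blast
    then have "t = 2^m" using tn by simp
    then show False using assms(2) by blast
  qed
  define S where "S = {k. k \<le> n \<and> odd (n choose k)}"
  have setEq: "{k \<in> {0..t}. odd (frak_a t t k)} = int ` (S - {n})"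
  proof (rule set_eqI)
    fix k
    show "k \<in> {k \<in> {0..t}. odd (frak_a t t k)} \<longleftrightarrow> k \<in> int ` (S - {n})"
    proof
      assume h: "k \<in> {k \<in> {0..t}. odd (frak_a t t k)}"
      then have k: "0 \<le> k" "k \<le> t" "odd (frak_a t t k)" by auto
      then have "k < t" using aux_eq[OF assms(1) k(1) k(2)] by (cases "k < t") auto
      then have "odd (n choose nat k)" using aux_eq[OF assms(1) k(1) k(2)] k n_def by simp
      then have "nat k \<in> S - {n}" using \<open>k < t\<close> k tn S_def by auto
      then show "k \<in> int ` (S - {n})" using k by (metis image_eqI int_nat_eq not_le order_less_le_trans)
    next
      assume "k \<in> int ` (S - {n})"
      then obtain j where j: "k = int j" "j \<le> n" "j \<noteq> n" "odd (n choose j)" unfolding S_def by auto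
      have "0 \<le> k" "k \<le> t" "k < t" using j tn by auto
      moreover have "nat k = j" using j by simp
      ultimately show "k \<in> {k \<in> {0..t}. odd (frak_a t t k)}"
        using aux_eq[OF assms(1), of k] j(4) n_def by simp
    qed
  qed
  have finS: "finite S" unfolding S_def by simp
  have nS: "n \<in> S" unfolding S_def by simp
  have cardeq: "card {k \<in> {0..t}. odd (frak_a t t k)} = card S - 1"
    unfolding setEq using card_image[of int "S - {n}"] nS finS by (simp add: inj_on_def)
  have evS: "even (card S)"
  proof -
    have "S = {k\<in>{..n}. odd (n choose k)}" unfolding S_def by auto
    then have "even (card S) = even (\<Sum>k\<le>n. n choose k)" using card_odd_parity[of "{..n}" "\<lambda>k. n choose k"] by simp
    also have "(\<Sum>k\<le>n. n choose k) = 2^n" by (rule choose_row_sum)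
    finally show ?thesis using n0 by simp
  qed
  obtain v q where vq: "n = 2^v*q" "odd q" using two_adic[OF n0] by blast
  have q1: "q \<noteq> 1" using vq np by auto
  have q0: "q > 1" using q1 vq n0 by (cases q) auto
  have lt: "2^v < n" using vq q0 by simp
  have "odd (n choose 2^v)" using choose_pow2[of v q 1] vq by simp
  then have "{0, 2^v, n} \<subseteq> S" unfolding S_def using lt by auto
  moreover have "card {0::nat, 2^v, n} = 3" using lt by simp
  ultimately have "card S \<ge> 3" using finS by (metis card_mono)
  then have c: "odd (card S - 1)" "card S - 1 > 1" using evS by auto
  have "\<not> (\<exists>m::nat. card S - 1 = 2 ^ m)"
  proof
    assume "\<exists>m::nat. card S - 1 = 2 ^ m"
    then obtain m where m: "card S - 1 = 2^m" by blast
    then show False using c by (cases m) auto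
  qed
  then show ?thesis using c cardeq by simp
qed

end
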